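(* Consider a pullback square in $\mathsf{PreOrdGrp}$ $(p_2,\bar p_2)\colon(P,P_P)\to(G,P_G)$, $(p_1,\bar p_1)\colon(P,P_P)\to(E,P_E)$, $(f,\bar f)\colon(G,P_G)\to(H,P_H)$, $(p,\bar p)\colon(E,P_E)\to(H,P_H)$, with $(f,\bar f)\circ(p_2,\bar p_2)=(p,\bar p)\circ(p_1,\bar p_1)$, in which all four arrows are regular epimorphisms. Then: (1) if Condition $(\star)$ holds for $(f,\bar f)$, then it holds for $(p_1,\bar p_1)$; (2) if $(p,\bar p)=(f,\bar f)$ (so that the square is the kernel pair of $(f,\bar f)$), then Condition $(\star)$ holds for $(p_1,\bar p_1)$ if and only if it holds for $(f,\bar f)$.
   Context: A preordered group is a pair $(G,P_G)$ with $G$ an additively written group and $P_G\subseteq G$ a submonoid closed under conjugation; morphisms are group homomorphisms $f$ with $f(P_G)\subseteq P_H$, $\bar f$ denoting the restriction to positive cones. This is $\mathsf{PreOrdGrp}$. Pullbacks are computed componentwise: $P=E\times_H G$ and $P_P=P_E\times_{P_H}P_G$. Regular epimorphisms are the morphisms with $f$ and $\bar f$ surjective. For a group $G$, $\eta_G\colon G\to G/[G,G]$ is the abelianization quotient. A morphism $(f,\bar f)\colon(G,P_G)\to(H,P_H)$ satisfies Condition $(\star)$ if for all $a,b,c\in P_G$ with $\eta_G(a)=\eta_G(b)$ and $f(b)=f(c)$, one has $a-b+c\in P_G$. *)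

theory Defs
  imports "HOL-Algebra.Algebra"
begin

text \<open>Groups are HOL-Algebra groups (written multiplicatively; the paper's additive
  a - b + c becomes a \<otimes> inv b \<otimes> c). A preordered group is a group together with a
  positive cone PG: a submonoid closed under conjugation.\<close>

definition preord_group :: "('a, 'm) monoid_scheme \<Rightarrow> 'a set \<Rightarrow> bool" where
  "preord_group G PG \<longleftrightarrow> group G \<and> PG \<subseteq> carrier G \<and> \<one>\<^bsub>G\<^esub> \<in> PG
     \<and> (\<forall>x\<in>PG. \<forall>y\<in>PG. x \<otimes>\<^bsub>G\<^esub> y \<in> PG)
     \<and> (\<forall>g\<in>carrier G. \<forall>x\<in>PG. g \<otimes>\<^bsub>G\<^esub> x \<otimes>\<^bsub>G\<^esub> inv\<^bsub>G\<^esub> g \<in> PG)"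

definition preord_hom :: "('a, 'm) monoid_scheme \<Rightarrow> 'a set \<Rightarrow> ('b, 'n) monoid_scheme \<Rightarrow> 'b set
    \<Rightarrow> ('a \<Rightarrow> 'b) \<Rightarrow> bool" where
  "preord_hom G PG H PH f \<longleftrightarrow> f \<in> hom G H \<and> f ` PG \<subseteq> PH"

definition preord_regepi :: "('a, 'm) monoid_scheme \<Rightarrow> 'a set \<Rightarrow> ('b, 'n) monoid_scheme \<Rightarrow> 'b set
    \<Rightarrow> ('a \<Rightarrow> 'b) \<Rightarrow> bool" where
  "preord_regepi G PG H PH f \<longleftrightarrow> preord_hom G PG H PH f \<and> f ` carrier G = carrier H \<and> f ` PG = PH"

definition abel_eta :: "('a, 'm) monoid_scheme \<Rightarrow> 'a \<Rightarrow> 'a set" where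
  "abel_eta G x = derived G (carrier G) #>\<^bsub>G\<^esub> x"

definition cond_star :: "('a, 'm) monoid_scheme \<Rightarrow> 'a set \<Rightarrow> ('a \<Rightarrow> 'b) \<Rightarrow> bool" where
  "cond_star G PG f \<longleftrightarrow> (\<forall>a\<in>PG. \<forall>b\<in>PG. \<forall>c\<in>PG.
      abel_eta G a = abel_eta G b \<and> f b = f c \<longrightarrow> a \<otimes>\<^bsub>G\<^esub> inv\<^bsub>G\<^esub> b \<otimes>\<^bsub>G\<^esub> c \<in> PG)"

text \<open>A commutative square p1: P\<rightarrow>E, p2: P\<rightarrow>G, p: E\<rightarrow>H, f: G\<rightarrow>H of preordered groups
  is a pullback iff the comparison map x \<mapsto> (p1 x, p2 x) is an isomorphism onto the
  componentwise pullback E \<times>_H G with cone P_E \<times>_{P_H} P_G (limits in PreOrdGrp are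
  computed componentwise).\<close>
definition preord_pullback ::
  "('p, 'm1) monoid_scheme \<Rightarrow> 'p set \<Rightarrow> ('e, 'm2) monoid_scheme \<Rightarrow> 'e set \<Rightarrow>
   ('g, 'm3) monoid_scheme \<Rightarrow> 'g set \<Rightarrow> ('h, 'm4) monoid_scheme \<Rightarrow> 'h set \<Rightarrow>
   ('p \<Rightarrow> 'e) \<Rightarrow> ('p \<Rightarrow> 'g) \<Rightarrow> ('e \<Rightarrow> 'h) \<Rightarrow> ('g \<Rightarrow> 'h) \<Rightarrow> bool" where
  "preord_pullback P PP E PE G PG H PH p1 p2 p f \<longleftrightarrow>
     preord_group P PP \<and> preord_group E PE \<and> preord_group G PG \<and> preord_group H PH \<and>
     preord_hom P PP E PE p1 \<and> preord_hom P PP G PG p2 \<and>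
     preord_hom E PE H PH p \<and> preord_hom G PG H PH f \<and>
     (\<forall>x\<in>carrier P. f (p2 x) = p (p1 x)) \<and>
     bij_betw (\<lambda>x. (p1 x, p2 x)) (carrier P) {(e, g). e \<in> carrier E \<and> g \<in> carrier G \<and> p e = f g} \<and>
     (\<forall>x\<in>carrier P. x \<in> PP \<longleftrightarrow> p1 x \<in> PE \<and> p2 x \<in> PG)"

end

theory Submission
  imports Defs
begin

lemma hinv:
  fixes G :: "('a, 'b) monoid_scheme" and H :: "('c, 'd) monoid_scheme"
  assumes "group G" "group H" "h \<in> hom G H" "x \<in> carrier G"
  shows "h (inv\<^bsub>G\<^esub> x) = inv\<^bsub>H\<^esub> (h x)"
  using assms group_hom.hom_inv[of G H h x] by (simp add: group_hom_def group_hom_axioms_def)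

lemma eta_eq_iff:
  fixes G :: "('a, 'b) monoid_scheme"
  assumes "group G" "a \<in> carrier G" "b \<in> carrier G"
  shows "abel_eta G a = abel_eta G b \<longleftrightarrow> a \<otimes>\<^bsub>G\<^esub> inv\<^bsub>G\<^esub> b \<in> derived G (carrier G)"
proof -
  interpret group G by fact
  have S: "subgroup (derived G (carrier G)) G" by (rule derived_is_subgroup) simp
  show ?thesis
  proof
    assume "abel_eta G a = abel_eta G b"
    then have "a \<in> derived G (carrier G) #>\<^bsub>G\<^esub> b"
      using rcos_self[OF assms(2) S] unfolding abel_eta_def by simp
    then show "a \<otimes>\<^bsub>G\<^esub> inv\<^bsub>G\<^esub> b \<in> derived G (carrier G)"
      using subgroup.rcos_module_imp[OF S assms(1) assms(3)] by blast
  next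
    assume "a \<otimes>\<^bsub>G\<^esub> inv\<^bsub>G\<^esub> b \<in> derived G (carrier G)"
    then have "a \<in> derived G (carrier G) #>\<^bsub>G\<^esub> b"
      using subgroup.rcos_module_rev[OF S assms(1) assms(3) assms(2)] by blast
    then show "abel_eta G a = abel_eta G b"
      unfolding abel_eta_def using repr_independence[OF _ assms(3) S] by metis
  qed
qed

lemma hom_derived:
  assumes "group G" "group H" "h \<in> hom G H"
  shows "h ` derived G (carrier G) \<subseteq> derived H (carrier H)"
proof -
  interpret group_hom G H h using assms by (simp add: group_hom_def group_hom_axioms_def)
  have "derived H (h ` carrier G) = h ` derived G (carrier G)"
    by (rule derived_img) simp
  moreover have "derived H (h ` carrier G) \<subseteq> derived H (carrier H)"
    by (rule H.mono_derived) (use hom_closed in auto)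
  ultimately show ?thesis by simp
qed

lemma eta_hom:
  assumes "group G" "group H" "h \<in> hom G H" "a \<in> carrier G" "b \<in> carrier G"
    "abel_eta G a = abel_eta G b"
  shows "abel_eta H (h a) = abel_eta H (h b)"
proof -
  interpret G: group G by fact
  interpret H: group H by fact
  have "a \<otimes>\<^bsub>G\<^esub> inv\<^bsub>G\<^esub> b \<in> derived G (carrier G)"
    using eta_eq_iff[OF assms(1,4,5)] assms(6) by simp
  then have "h (a \<otimes>\<^bsub>G\<^esub> inv\<^bsub>G\<^esub> b) \<in> derived H (carrier H)"
    using hom_derived[OF assms(1-3)] by blast
  moreover have "h (a \<otimes>\<^bsub>G\<^esub> inv\<^bsub>G\<^esub> b) = h a \<otimes>\<^bsub>H\<^esub> inv\<^bsub>H\<^esub> h b"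
    using assms hinv[OF assms(1-3,5)] by (simp add: hom_mult)
  moreover have "h a \<in> carrier H" "h b \<in> carrier H" using hom_in_carrier[OF assms(3,4)] hom_in_carrier[OF assms(3,5)] .
  ultimately show ?thesis
    using eta_eq_iff[OF assms(2)] by simp
qed

lemma part1:
  assumes pb: "preord_pullback P PP E PE G PG H PH p1 p2 p f"
    and st: "cond_star G PG f"
  shows "cond_star P PP p1"
  unfolding cond_star_def
proof (intro ballI impI)
  fix a b c assume abc: "a \<in> PP" "b \<in> PP" "c \<in> PP"
    and h: "abel_eta P a = abel_eta P b \<and> p1 b = p1 c"
  from pb have gP: "group P" and gE: "group E" and gG: "group G"
    and PPc: "PP \<subseteq> carrier P" and PGc: "PG \<subseteq> carrier G"
    and h1: "p1 \<in> hom P E" and h2: "p2 \<in> hom P G" and hf: "p1 ` PP \<subseteq> PE" and hf2: "p2 ` PP \<subseteq> PG"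
    and comm: "\<forall>x\<in>carrier P. f (p2 x) = p (p1 x)"
    and cone: "\<forall>x\<in>carrier P. x \<in> PP \<longleftrightarrow> p1 x \<in> PE \<and> p2 x \<in> PG"
    unfolding preord_pullback_def preord_group_def preord_hom_def by auto
  interpret P: group P by fact
  interpret E: group E by fact
  interpret G: group G by fact
  have c: "a \<in> carrier P" "b \<in> carrier P" "c \<in> carrier P" using abc PPc by auto
  let ?x = "a \<otimes>\<^bsub>P\<^esub> inv\<^bsub>P\<^esub> b \<otimes>\<^bsub>P\<^esub> c"
  have xc: "?x \<in> carrier P" using c by simp
  have "p1 ?x = p1 a \<otimes>\<^bsub>E\<^esub> inv\<^bsub>E\<^esub> p1 b \<otimes>\<^bsub>E\<^esub> p1 c"
    using c h1 hinv[OF gP gE h1 c(2)] by (simp add: hom_mult)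
  also have "\<dots> = p1 a"
  proof -
    have "p1 a \<in> carrier E" "p1 c \<in> carrier E" using hom_in_carrier[OF h1 c(1)] hom_in_carrier[OF h1 c(3)] .
    then show ?thesis using h by (simp add: E.m_assoc)
  qed
  finally have 1: "p1 ?x \<in> PE" using hf abc by auto
  have "p2 ?x = p2 a \<otimes>\<^bsub>G\<^esub> inv\<^bsub>G\<^esub> p2 b \<otimes>\<^bsub>G\<^esub> p2 c"
    using c h2 hinv[OF gP gG h2 c(2)] by (simp add: hom_mult)
  moreover have "abel_eta G (p2 a) = abel_eta G (p2 b)"
    using eta_hom[OF gP gG h2 c(1,2)] h by blast
  moreover have "f (p2 b) = f (p2 c)" using comm c h by simp
  moreover have "p2 a \<in> PG" "p2 b \<in> PG" "p2 c \<in> PG" using hf2 abc by auto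
  ultimately have 2: "p2 ?x \<in> PG" using st unfolding cond_star_def by simp
  show "?x \<in> PP" using cone xc 1 2 by blast
qed

lemma part2:
  assumes pb: "preord_pullback Q PQ K PK K PK L PL q1 q2 g g"
    and st: "cond_star Q PQ q1"
  shows "cond_star K PK g"
  unfolding cond_star_def
proof (intro ballI impI)
  fix a b c assume abc: "a \<in> PK" "b \<in> PK" "c \<in> PK"
    and h: "abel_eta K a = abel_eta K b \<and> g b = g c"
  from pb have gQ: "group Q" and gK: "group K"
    and PQc: "PQ \<subseteq> carrier Q" and PKc: "PK \<subseteq> carrier K"
    and h1: "q1 \<in> hom Q K" and h2: "q2 \<in> hom Q K"
    and bij: "bij_betw (\<lambda>x. (q1 x, q2 x)) (carrier Q) {(e, f). e \<in> carrier K \<and> f \<in> carrier K \<and> g e = g f}"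
    and cone: "\<forall>x\<in>carrier Q. x \<in> PQ \<longleftrightarrow> q1 x \<in> PK \<and> q2 x \<in> PK"
    unfolding preord_pullback_def preord_group_def preord_hom_def by auto
  interpret Q: group Q by fact
  interpret K: group K by fact
  have c: "a \<in> carrier K" "b \<in> carrier K" "c \<in> carrier K" using abc PKc by auto
  define F where "F = (\<lambda>x. (q1 x, q2 x))"
  have inj: "inj_on F (carrier Q)" and img: "F ` carrier Q = {(e, f). e \<in> carrier K \<and> f \<in> carrier K \<and> g e = g f}"
    using bij unfolding bij_betw_def F_def by auto
  have ex: "\<exists>x\<in>carrier Q. q1 x = u \<and> q2 x = v" if "u \<in> carrier K" "v \<in> carrier K" "g u = g v" for u v
  proof -
    have "(u, v) \<in> F ` carrier Q" using img that by auto
    then show ?thesis unfolding F_def by auto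
  qed
  define d where "d = (\<lambda>k. SOME x. x \<in> carrier Q \<and> q1 x = k \<and> q2 x = k)"
  have d: "d k \<in> carrier Q \<and> q1 (d k) = k \<and> q2 (d k) = k" if "k \<in> carrier K" for k
    unfolding d_def by (rule someI_ex) (use ex[OF that that] in blast)
  have eqQ: "x = y" if "x \<in> carrier Q" "y \<in> carrier Q" "q1 x = q1 y" "q2 x = q2 y" for x y
    using inj that unfolding inj_on_def F_def by auto
  have dhom: "d \<in> hom K Q"
  proof (rule homI)
    fix x y assume xy: "x \<in> carrier K" "y \<in> carrier K"
    show "d (x \<otimes>\<^bsub>K\<^esub> y) = d x \<otimes>\<^bsub>Q\<^esub> d y"
      by (rule eqQ) (use xy d h1 h2 in \<open>auto simp: hom_mult\<close>)
  qed (use d in auto)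
  obtain z where z: "z \<in> carrier Q" "q1 z = b" "q2 z = c" using ex[OF c(2,3)] h by blast
  have dP: "d a \<in> PQ" "d b \<in> PQ" using cone d c abc by auto
  have zP: "z \<in> PQ" using cone z abc by auto
  have "abel_eta Q (d a) = abel_eta Q (d b)"
    using eta_hom[OF gK gQ dhom c(1,2)] h by blast
  moreover have "q1 (d b) = q1 z" using d c z by simp
  ultimately have xP: "d a \<otimes>\<^bsub>Q\<^esub> inv\<^bsub>Q\<^esub> d b \<otimes>\<^bsub>Q\<^esub> z \<in> PQ"
    using st dP zP unfolding cond_star_def by blast
  have "q2 (d a \<otimes>\<^bsub>Q\<^esub> inv\<^bsub>Q\<^esub> d b \<otimes>\<^bsub>Q\<^esub> z) = a \<otimes>\<^bsub>K\<^esub> inv\<^bsub>K\<^esub> b \<otimes>\<^bsub>K\<^esub> c"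
    using d c z h2 hinv[OF gQ gK h2, of "d b"] by (simp add: hom_mult)
  then show "a \<otimes>\<^bsub>K\<^esub> inv\<^bsub>K\<^esub> b \<otimes>\<^bsub>K\<^esub> c \<in> PK"
    using cone xP PQc by (metis subsetD)
qed

theorem lemma2p7:
  fixes P :: "('p, 'm1) monoid_scheme" and E :: "('e, 'm2) monoid_scheme"
    and G :: "('g, 'm3) monoid_scheme" and H :: "('h, 'm4) monoid_scheme"
  shows "(preord_pullback P PP E PE G PG H PH p1 p2 p f \<and>
          preord_regepi P PP E PE p1 \<and> preord_regepi P PP G PG p2 \<and>
          preord_regepi E PE H PH p \<and> preord_regepi G PG H PH f \<and>
          cond_star G PG f \<longrightarrow> cond_star P PP p1)
       \<and> (\<forall>(Q :: ('q, 'm5) monoid_scheme) PQ q1 q2 (K :: ('k, 'm6) monoid_scheme) PK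
              (L :: ('l, 'm7) monoid_scheme) PL (g :: 'k \<Rightarrow> 'l).
            preord_pullback Q PQ K PK K PK L PL q1 q2 g g \<and>
            preord_regepi Q PQ K PK q1 \<and> preord_regepi Q PQ K PK q2 \<and>
            preord_regepi K PK L PL g \<longrightarrow>
            (cond_star Q PQ q1 \<longleftrightarrow> cond_star K PK g))"
proof (intro conjI allI impI)
  assume "preord_pullback P PP E PE G PG H PH p1 p2 p f \<and>
          preord_regepi P PP E PE p1 \<and> preord_regepi P PP G PG p2 \<and>
          preord_regepi E PE H PH p \<and> preord_regepi G PG H PH f \<and> cond_star G PG f"
  then show "cond_star P PP p1" using part1 by blast
next
  fix Q :: "('q, 'm5) monoid_scheme" and PQ q1 q2 and K :: "('k, 'm6) monoid_scheme" and PK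
    and L :: "('l, 'm7) monoid_scheme" and PL and g :: "'k \<Rightarrow> 'l"
  assume a: "preord_pullback Q PQ K PK K PK L PL q1 q2 g g \<and>
            preord_regepi Q PQ K PK q1 \<and> preord_regepi Q PQ K PK q2 \<and>
            preord_regepi K PK L PL g"
  then have pb: "preord_pullback Q PQ K PK K PK L PL q1 q2 g g" by blast
  show "cond_star Q PQ q1 \<longleftrightarrow> cond_star K PK g"
    using part1[OF pb] part2[OF pb] by blast
qed

end
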